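(* Let $D=[0,1]^2\setminus\{(0,0),(1,1)\}$. A function $J\colon D\to[0,1]$ is an involutive Jamesian function if and only if it satisfies the following three conditions: (i) $J(a,J(a,b))=b$ for all $0<a<1$ and $0\le b\le 1$; (ii) $J(b,a)=1-J(a,b)$ for all $(a,b)\in D$; (iii) $J(a,b)$ is a non-decreasing function of $a$ for each $0\le b\le 1$ and a strictly increasing function of $a$ for each $0<b<1$.
   Context: Let $D=[0,1]^2\setminus\{(0,0),(1,1)\}$. A function $J\colon D\to\mathbb{R}$ is called Jamesian if it satisfies, for all $(a,b)\in D$: (a) $J(a,\tfrac12)=a$; (b) $J(a,0)=1$ for $0<a\le 1$; (c) $J(b,a)=1-J(a,b)$; (d) $J(1-b,1-a)=J(a,b)$; (e) $J(a,b)$ is a non-decreasing function of $a$ for each $0\le b\le 1$ and a strictly increasing function of $a$ for each $0<b<1$. A Jamesian function is called involutive if in addition $J(a,J(a,b))=b$ whenever $0<a<1$ and $0\le b\le 1$. *)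

theory Defs
  imports Complex_Main
begin

definition JD :: "(real \<times> real) set" where
  "JD = ({0..1} \<times> {0..1}) - {(0,0), (1,1)}"

definition mono_cond :: "(real \<Rightarrow> real \<Rightarrow> real) \<Rightarrow> bool" where
  "mono_cond J \<longleftrightarrow>
     (\<forall>b \<in> {0..1}. \<forall>a a'. (a,b) \<in> JD \<and> (a',b) \<in> JD \<and> a \<le> a' \<longrightarrow> J a b \<le> J a' b) \<and>
     (\<forall>b \<in> {0<..<1}. \<forall>a a'. (a,b) \<in> JD \<and> (a',b) \<in> JD \<and> a < a' \<longrightarrow> J a b < J a' b)"

definition jamesian :: "(real \<Rightarrow> real \<Rightarrow> real) \<Rightarrow> bool" where
  "jamesian J \<longleftrightarrow>
     (\<forall>a \<in> {0..1}. J a (1/2) = a) \<and>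
     (\<forall>a \<in> {0<..1}. J a 0 = 1) \<and>
     (\<forall>(a,b) \<in> JD. J b a = 1 - J a b) \<and>
     (\<forall>(a,b) \<in> JD. J (1 - b) (1 - a) = J a b) \<and>
     mono_cond J"

definition involutive_jamesian :: "(real \<Rightarrow> real \<Rightarrow> real) \<Rightarrow> bool" where
  "involutive_jamesian J \<longleftrightarrow>
     jamesian J \<and> (\<forall>a \<in> {0<..<1}. \<forall>b \<in> {0..1}. J a (J a b) = b)"

end

theory Submission
  imports Defs
begin

lemma JD_iff: "(a,b) \<in> JD \<longleftrightarrow> 0 \<le> a \<and> a \<le> 1 \<and> 0 \<le> b \<and> b \<le> 1 \<and> \<not>(a = 0 \<and> b = 0) \<and> \<not>(a = 1 \<and> b = 1)"
  by (auto simp: JD_def)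

lemma conv:
  fixes J :: "real \<Rightarrow> real \<Rightarrow> real"
  assumes rng: "\<And>a b. (a,b) \<in> JD \<Longrightarrow> 0 \<le> J a b \<and> J a b \<le> 1"
    and inv: "\<And>a b. 0 < a \<Longrightarrow> a < 1 \<Longrightarrow> 0 \<le> b \<Longrightarrow> b \<le> 1 \<Longrightarrow> J a (J a b) = b"
    and sy: "\<And>a b. (a,b) \<in> JD \<Longrightarrow> J b a = 1 - J a b"
    and mo: "mono_cond J"
  shows "jamesian J"
proof -
  have smo: "\<And>a a' b. 0 < b \<Longrightarrow> b < 1 \<Longrightarrow> 0 \<le> a \<Longrightarrow> a < a' \<Longrightarrow> a' \<le> 1 \<Longrightarrow> J a b < J a' b"
    using mo unfolding mono_cond_def by (auto simp: JD_iff)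
  have wmo: "\<And>a a' b. 0 \<le> b \<Longrightarrow> b \<le> 1 \<Longrightarrow> (a,b) \<in> JD \<Longrightarrow> (a',b) \<in> JD \<Longrightarrow> a \<le> a' \<Longrightarrow> J a b \<le> J a' b"
    using mo unfolding mono_cond_def by auto
  have dec: "\<And>a b b'. 0 < a \<Longrightarrow> a < 1 \<Longrightarrow> 0 \<le> b \<Longrightarrow> b < b' \<Longrightarrow> b' \<le> 1 \<Longrightarrow> J a b' < J a b"
  proof -
    fix a b b' :: real assume h: "0 < a" "a < 1" "0 \<le> b" "b < b'" "b' \<le> 1"
    have "J b a < J b' a" using smo h by auto
    moreover have "J a b = 1 - J b a" using sy[of b a] h by (simp add: JD_iff)
    moreover have "J a b' = 1 - J b' a" using sy[of b' a] h by (simp add: JD_iff)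
    ultimately show "J a b' < J a b" by simp
  qed
  have z1: "\<And>a. 0 < a \<Longrightarrow> a < 1 \<Longrightarrow> J a 0 = 1"
  proof -
    fix a :: real assume h: "0 < a" "a < 1"
    define d where "d = J a 0"
    have d: "0 \<le> d" "d \<le> 1" using rng[of a 0] h by (auto simp: JD_iff d_def)
    have "J a d = 0" using inv[of a 0] h d_def by simp
    show "J a 0 = 1"
    proof (rule ccontr)
      assume "J a 0 \<noteq> 1" hence "d < 1" using d d_def by simp
      hence "J a 1 < J a d" using dec[of a d 1] h d by simp
      moreover have "0 \<le> J a 1" using rng[of a 1] h by (simp add: JD_iff)
      ultimately show False using \<open>J a d = 0\<close> by simp
    qed
  qed
  have A0: "\<And>a. 0 < a \<Longrightarrow> a \<le> 1 \<Longrightarrow> J a 0 = 1"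
  proof -
    fix a :: real assume h: "0 < a" "a \<le> 1"
    show "J a 0 = 1"
    proof (cases "a < 1")
      case True thus ?thesis using z1 h by simp
    next
      case False hence a1: "a = 1" using h by simp
      have "J (1/2) 0 \<le> J 1 0" using wmo[of 0 "1/2" 1] by (simp add: JD_iff)
      moreover have "J 1 0 \<le> 1" using rng[of 1 0] by (simp add: JD_iff)
      ultimately show ?thesis using z1[of "1/2"] a1 by simp
    qed
  qed
  have B0: "\<And>b. 0 < b \<Longrightarrow> b \<le> 1 \<Longrightarrow> J 0 b = 0"
  proof -
    fix b :: real assume "0 < b" "b \<le> 1"
    thus "J 0 b = 0" using sy[of b 0] A0[of b] by (simp add: JD_iff)
  qed
  have A1: "\<And>a. 0 \<le> a \<Longrightarrow> a < 1 \<Longrightarrow> J a 1 = 0"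
  proof -
    fix a :: real assume h: "0 \<le> a" "a < 1"
    show "J a 1 = 0"
    proof (cases "a = 0")
      case True thus ?thesis using B0 by simp
    next
      case False thus ?thesis using inv[of a 0] z1[of a] h by simp
    qed
  qed
  have B1: "\<And>b. 0 \<le> b \<Longrightarrow> b < 1 \<Longrightarrow> J 1 b = 1"
  proof -
    fix b :: real assume "0 \<le> b" "b < 1"
    thus "J 1 b = 1" using sy[of b 1] A1[of b] by (simp add: JD_iff)
  qed
  have half: "\<And>a. 0 \<le> a \<Longrightarrow> a \<le> 1 \<Longrightarrow> J a (1/2) = a"
  proof -
    fix a :: real assume h: "0 \<le> a" "a \<le> 1"
    show "J a (1/2) = a"
    proof (cases "a = 0 \<or> a = 1")
      case True thus ?thesis
        using sy[of "1/2" 0] sy[of "1/2" 1] A0[of "1/2"] A1[of "1/2"] by (auto simp: JD_iff)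
    next
      case False
      hence h2: "0 < a" "a < 1" using h by auto
      define c where "c = J a (1/2)"
      have c: "0 \<le> c" "c \<le> 1" using rng[of a "1/2"] h2 by (auto simp: JD_iff c_def)
      have "J a c = 1/2" using inv[of a "1/2"] h2 c_def by simp
      hence e1: "J c a = 1/2" using sy[of a c] h2 c by (simp add: JD_iff)
      have e2: "J a a = 1/2" using sy[of a a] h2 by (simp add: JD_iff)
      show ?thesis
      proof (rule ccontr)
        assume "J a (1/2) \<noteq> a" hence "c < a \<or> a < c" using c_def by auto
        thus False
        proof
          assume "c < a" thus False using smo[of a c a] h2 c e1 e2 by simp
        next
          assume "a < c" thus False using smo[of a a c] h2 c e1 e2 by simp
        qed
      qed
    qed
  qed
  have refl: "\<And>a b. (a,b) \<in> JD \<Longrightarrow> J (1 - b) (1 - a) = J a b"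
  proof -
    fix a b :: real assume ab: "(a,b) \<in> JD"
    show "J (1 - b) (1 - a) = J a b"
    proof (cases "0 < a \<and> a < 1 \<and> 0 < b \<and> b < 1")
      case True
      hence h: "0 < a" "a < 1" "0 < b" "b < 1" by auto
      define c where "c = J a b"
      have c: "0 \<le> c" "c \<le> 1" using rng[of a b] ab by (auto simp: c_def)
      have s2: "J a c = b" using inv[of a b] h c_def by simp
      have c0: "c \<noteq> 0" using s2 A0[of a] h by auto
      have c1: "c \<noteq> 1" using s2 A1[of a] h by auto
      have s3: "J c a = 1 - b" using sy[of a c] h c s2 by (simp add: JD_iff)
      have s4: "J c (1 - b) = a" using inv[of c a] c c0 c1 h s3 by simp
      have s5: "J (1 - b) c = 1 - a" using sy[of c "1-b"] c c0 c1 h s4 by (simp add: JD_iff)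
      have "J (1 - b) (1 - a) = c" using inv[of "1-b" c] h c s5 by simp
      thus ?thesis using c_def by simp
    next
      case False
      hence "a = 0 \<or> a = 1 \<or> b = 0 \<or> b = 1" using ab by (auto simp: JD_iff)
      thus ?thesis
      proof (elim disjE)
        assume "a = 0" thus ?thesis using ab B0[of b] A1[of "1-b"] by (simp add: JD_iff)
      next
        assume "a = 1" thus ?thesis using ab B1[of b] A0[of "1-b"] by (simp add: JD_iff)
      next
        assume "b = 0" thus ?thesis using ab A0[of a] B1[of "1-a"] by (simp add: JD_iff)
      next
        assume "b = 1" thus ?thesis using ab A1[of a] B0[of "1-a"] by (simp add: JD_iff)
      qed
    qed
  qed
  have "\<forall>(a,b) \<in> JD. J b a = 1 - J a b" using sy by blast
  moreover have "\<forall>(a,b) \<in> JD. J (1 - b) (1 - a) = J a b" using refl by blast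
  moreover have "\<forall>a \<in> {0..1}. J a (1/2) = a" using half by simp
  moreover have "\<forall>a \<in> {0<..1}. J a 0 = 1" using A0 by simp
  ultimately show ?thesis unfolding jamesian_def using mo by blast
qed

theorem proposition5p1:
  fixes J :: "real \<Rightarrow> real \<Rightarrow> real"
  assumes "\<forall>(a,b) \<in> JD. J a b \<in> {0..1}"
  shows "involutive_jamesian J \<longleftrightarrow>
           (\<forall>a \<in> {0<..<1}. \<forall>b \<in> {0..1}. J a (J a b) = b) \<and>
           (\<forall>(a,b) \<in> JD. J b a = 1 - J a b) \<and>
           mono_cond J"
proof
  assume "involutive_jamesian J" thus "(\<forall>a \<in> {0<..<1}. \<forall>b \<in> {0..1}. J a (J a b) = b) \<and>
           (\<forall>(a,b) \<in> JD. J b a = 1 - J a b) \<and> mono_cond J"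
    unfolding involutive_jamesian_def jamesian_def by auto
next
  assume h: "(\<forall>a \<in> {0<..<1}. \<forall>b \<in> {0..1}. J a (J a b) = b) \<and>
           (\<forall>(a,b) \<in> JD. J b a = 1 - J a b) \<and> mono_cond J"
  have "jamesian J"
  proof (rule conv)
    fix a b :: real assume "(a,b) \<in> JD" thus "0 \<le> J a b \<and> J a b \<le> 1" using assms by auto
  next
    fix a b :: real assume "0 < a" "a < 1" "0 \<le> b" "b \<le> 1" thus "J a (J a b) = b" using h by auto
  next
    fix a b :: real assume "(a,b) \<in> JD" thus "J b a = 1 - J a b" using h by auto
  next
    show "mono_cond J" using h by blast
  qed
  thus "involutive_jamesian J" unfolding involutive_jamesian_def using h by auto
qed

end
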